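(* Let $\mathbf{k}$ be an algebraically closed field of characteristic zero, $\mathcal{A}=\mathbf{k}[x_1,\ldots,x_n]$, $\mathcal{V}=\bigoplus_{i=1}^n\mathcal{A}\frac{\partial}{\partial x_i}$, $\mathcal{L}_+\subset\mathcal{V}$ the subalgebra of vector fields vanishing at the origin, and $\mathcal{D}$ the Weyl algebra. Let $\varphi:\mathcal{A}\# U(\mathcal{V})\to\mathcal{D}\otimes U(\mathcal{L}_+)$ be the algebra homomorphism which is the natural embedding $f\mapsto f\otimes1$ on $\mathcal{A}$ and satisfies $\varphi(x^k\frac{\partial}{\partial x_p})=x^k\frac{\partial}{\partial x_p}\otimes 1+\sum_{0<m\leq k}\binom{k}{m}x^{k-m}\otimes x^m\frac{\partial}{\partial x_p}$, and let $\psi:\mathcal{D}\otimes U(\mathcal{L}_+)\to\mathcal{A}\# U(\mathcal{V})$ be the algebra homomorphism with $\psi(x^r\partial^s\otimes 1)=x^r\#(\frac{\partial}{\partial x_1})^{s_1}\cdots(\frac{\partial}{\partial x_n})^{s_n}$ and $\psi(1\otimes x^m\frac{\partial}{\partial x_p})=\sum_{0\leq k\leq m}(-1)^{m-k}\binom{m}{k}x^{m-k}\# x^k\frac{\partial}{\partial x_p}$ for $m\neq 0$. Then $\psi\circ\varphi$ and $\varphi\circ\psi$ are the identity maps, i.e., $\varphi$ and $\psi$ are mutually inverse.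
   Context: Multi-index notation: $x^k=x_1^{k_1}\cdots x_n^{k_n}$, $\partial^s=(\partial/\partial x_1)^{s_1}\cdots(\partial/\partial x_n)^{s_n}$; $m\le k$ componentwise, $0<m\le k$ means additionally $m\ne0$; $\binom{k}{m}=\prod_i\binom{k_i}{m_i}$; $(-1)^{s}=(-1)^{s_1+\cdots+s_n}$. The smash product $\mathcal{A}\# U(\mathcal{V})$ is $\mathcal{A}\otimes U(\mathcal{V})$ with product $(f\# u)(g\# v)=\sum_i f\,u_i^{(1)}(g)\# u_i^{(2)}v$, $\Delta(u)=\sum_i u_i^{(1)}\otimes u_i^{(2)}$ the coproduct; in particular $(1\#\eta)(f\#1)=f\#\eta+\eta(f)\#1$. *)

theory Defs
  imports "HOL-Computational_Algebra.Polynomial" "HOL-Library.Poly_Mapping"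
begin

typedef 'g word = "UNIV :: 'g list set" by simp

setup_lifting type_definition_word

instantiation word :: (type) monoid_add
begin
lift_definition zero_word :: "'g word" is "[]" .
lift_definition plus_word :: "'g word \<Rightarrow> 'g word \<Rightarrow> 'g word" is "(@)" .
instance by standard (transfer, simp)+
end

text \<open>Free associative (noncommutative) k-algebra on generators 'g:
  finitely supported k-valued functions on words, with convolution product.\<close>
type_synonym ('k, 'g) freealg = "'g word \<Rightarrow>\<^sub>0 'k"

lift_definition letter :: "'g \<Rightarrow> 'g word" is "\<lambda>g. [g]" .

definition gen :: "'g \<Rightarrow> ('k::ring_1, 'g) freealg" where
  "gen g = Poly_Mapping.single (letter g) 1"

definition fsc :: "'k \<Rightarrow> ('k::ring_1, 'g) freealg" where
  "fsc c = Poly_Mapping.single 0 c"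

inductive_set ideal_gen :: "('k::ring_1, 'g) freealg set \<Rightarrow> ('k, 'g) freealg set"
  for R where
  base: "r \<in> R \<Longrightarrow> r \<in> ideal_gen R"
| zero: "0 \<in> ideal_gen R"
| add: "a \<in> ideal_gen R \<Longrightarrow> b \<in> ideal_gen R \<Longrightarrow> a + b \<in> ideal_gen R"
| mult: "a \<in> ideal_gen R \<Longrightarrow> x * a * y \<in> ideal_gen R"

text \<open>Algebra homomorphism between quotient algebras F1/I1 -> F2/I2, given on
  representatives.\<close>
definition quot_alg_hom ::
  "('k::ring_1, 'g) freealg set \<Rightarrow> ('k, 'h) freealg set \<Rightarrow>
   (('k, 'g) freealg \<Rightarrow> ('k, 'h) freealg) \<Rightarrow> bool" where
  "quot_alg_hom I J f \<longleftrightarrow>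
     (\<forall>a b. a - b \<in> I \<longrightarrow> f a - f b \<in> J) \<and>
     (\<forall>a b. f (a + b) - (f a + f b) \<in> J) \<and>
     (\<forall>c a. f (fsc c * a) - fsc c * f a \<in> J) \<and>
     (\<forall>a b. f (a * b) - f a * f b \<in> J) \<and>
     f 1 - 1 \<in> J"

type_synonym ('k, 'n) pol = "('n \<Rightarrow>\<^sub>0 nat) \<Rightarrow>\<^sub>0 'k"

definition xm :: "('n \<Rightarrow>\<^sub>0 nat) \<Rightarrow> ('k::comm_ring_1, 'n) pol" where
  "xm r = Poly_Mapping.single r 1"

definition psc :: "'k \<Rightarrow> ('k::comm_ring_1, 'n) pol" where
  "psc c = Poly_Mapping.single 0 c"

definition pdx :: "'n \<Rightarrow> ('k::comm_ring_1, 'n) pol \<Rightarrow> ('k, 'n) pol" where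
  "pdx i f = (\<Sum>r\<in>Poly_Mapping.keys f.
      Poly_Mapping.single (r - Poly_Mapping.single i 1)
        (of_nat (Poly_Mapping.lookup r i) * Poly_Mapping.lookup f r))"

text \<open>vector field sum_j eta_j d/dx_j, represented by its coefficient function\<close>
type_synonym ('k, 'n) vf = "'n \<Rightarrow> ('k, 'n) pol"

definition vact :: "('k::comm_ring_1, 'n::finite) vf \<Rightarrow> ('k, 'n) pol \<Rightarrow> ('k, 'n) pol" where
  "vact eta f = (\<Sum>j\<in>UNIV. eta j * pdx j f)"

definition vbr :: "('k::comm_ring_1, 'n::finite) vf \<Rightarrow> ('k, 'n) vf \<Rightarrow> ('k, 'n) vf" where
  "vbr xi eta = (\<lambda>i. vact xi (eta i) - vact eta (xi i))"

definition vsc :: "'k \<Rightarrow> ('k::comm_ring_1, 'n) vf \<Rightarrow> ('k, 'n) vf" where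
  "vsc c eta = (\<lambda>i. psc c * eta i)"

definition Lplus :: "('k::comm_ring_1, 'n) vf set" where
  "Lplus = {eta. \<forall>j. Poly_Mapping.lookup (eta j) 0 = 0}"

definition xd :: "('n \<Rightarrow>\<^sub>0 nat) \<Rightarrow> 'n \<Rightarrow> ('k::comm_ring_1, 'n) vf" where
  "xd k p = (\<lambda>j. if j = p then xm k else 0)"

definition dvec :: "'n \<Rightarrow> ('k::comm_ring_1, 'n) vf" where
  "dvec p = xd 0 p"

definition mle :: "('n \<Rightarrow>\<^sub>0 nat) \<Rightarrow> ('n \<Rightarrow>\<^sub>0 nat) \<Rightarrow> bool" where
  "mle m k \<longleftrightarrow> (\<forall>i. Poly_Mapping.lookup m i \<le> Poly_Mapping.lookup k i)"

definition mbinom :: "('n::finite \<Rightarrow>\<^sub>0 nat) \<Rightarrow> ('n \<Rightarrow>\<^sub>0 nat) \<Rightarrow> nat" where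
  "mbinom k m = (\<Prod>i\<in>UNIV. Poly_Mapping.lookup k i choose Poly_Mapping.lookup m i)"

definition msize :: "('n::finite \<Rightarrow>\<^sub>0 nat) \<Rightarrow> nat" where
  "msize m = (\<Sum>i\<in>UNIV. Poly_Mapping.lookup m i)"

definition oprod :: "('n::{finite,linorder} \<Rightarrow> 'a::monoid_mult) \<Rightarrow> ('n \<Rightarrow>\<^sub>0 nat) \<Rightarrow> 'a" where
  "oprod a s = foldr (\<lambda>i acc. a i ^ Poly_Mapping.lookup s i * acc) (sorted_list_of_set UNIV) 1"

section \<open>The smash product A # U(V), by generators and relations\<close>

datatype ('a, 'v) sgen = GA 'a | GV 'v

definition smash_rel :: "('k::comm_ring_1, (('k, 'n::finite) pol, ('k, 'n) vf) sgen) freealg set" where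
  "smash_rel =
     {gen (GA (f + g)) - gen (GA f) - gen (GA g) | f g. True} \<union>
     {gen (GA (psc c * f)) - fsc c * gen (GA f) | c f. True} \<union>
     {gen (GA f) * gen (GA g) - gen (GA (f * g)) | f g. True} \<union>
     {gen (GA 1) - 1} \<union>
     {gen (GV (\<lambda>i. xi i + eta i)) - gen (GV xi) - gen (GV eta) | xi eta. True} \<union>
     {gen (GV (vsc c eta)) - fsc c * gen (GV eta) | c eta. True} \<union>
     {gen (GV xi) * gen (GV eta) - gen (GV eta) * gen (GV xi) - gen (GV (vbr xi eta)) | xi eta. True} \<union>
     {gen (GV eta) * gen (GA f) - gen (GA f) * gen (GV eta) - gen (GA (vact eta f)) | eta f. True}"

definition smash_ideal :: "('k::comm_ring_1, (('k, 'n::finite) pol, ('k, 'n) vf) sgen) freealg set" where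
  "smash_ideal = ideal_gen smash_rel"

section \<open>D \<otimes> U(L_+), by generators and relations\<close>

datatype ('n, 'v) tgen = GX 'n | GD 'n | GL 'v

definition tens_rel :: "('k::comm_ring_1, ('n::finite, ('k, 'n) vf) tgen) freealg set" where
  "tens_rel =
     \<comment> \<open>Weyl algebra\<close>
     {gen (GX i) * gen (GX j) - gen (GX j) * gen (GX i) | i j. True} \<union>
     {gen (GD i) * gen (GD j) - gen (GD j) * gen (GD i) | i j. True} \<union>
     {gen (GD i) * gen (GX j) - gen (GX j) * gen (GD i) - (if i = j then 1 else 0) | i j. True} \<union>
     \<comment> \<open>universal enveloping algebra of L_+ (generators outside L_+ are killed)\<close>
     {gen (GL eta) | eta. eta \<notin> Lplus} \<union>
     {gen (GL (\<lambda>i. xi i + eta i)) - gen (GL xi) - gen (GL eta) | xi eta. xi \<in> Lplus \<and> eta \<in> Lplus} \<union>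
     {gen (GL (vsc c eta)) - fsc c * gen (GL eta) | c eta. eta \<in> Lplus} \<union>
     {gen (GL xi) * gen (GL eta) - gen (GL eta) * gen (GL xi) - gen (GL (vbr xi eta)) | xi eta.
        xi \<in> Lplus \<and> eta \<in> Lplus} \<union>
     \<comment> \<open>tensor product: the two factors commute\<close>
     {gen (GL eta) * gen (GX i) - gen (GX i) * gen (GL eta) | eta i. True} \<union>
     {gen (GL eta) * gen (GD i) - gen (GD i) * gen (GL eta) | eta i. True}"

definition tens_ideal :: "('k::comm_ring_1, ('n::finite, ('k, 'n) vf) tgen) freealg set" where
  "tens_ideal = ideal_gen tens_rel"

definition Dxd :: "('n::{finite,linorder} \<Rightarrow>\<^sub>0 nat) \<Rightarrow> ('n \<Rightarrow>\<^sub>0 nat) \<Rightarrow> ('k::comm_ring_1, ('n, ('k, 'n) vf) tgen) freealg" where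
  "Dxd r s = oprod (\<lambda>i. gen (GX i)) r * oprod (\<lambda>i. gen (GD i)) s"

definition Aemb :: "('k::comm_ring_1, 'n::{finite,linorder}) pol \<Rightarrow> ('k, ('n, ('k, 'n) vf) tgen) freealg" where
  "Aemb f = (\<Sum>r\<in>Poly_Mapping.keys f. fsc (Poly_Mapping.lookup f r) * Dxd r 0)"

end

theory Submission
  imports Defs "HOL-Library.FuncSet" "HOL-Library.Function_Algebras"
begin


lemma id_base: "r \<in> R \<Longrightarrow> r \<in> ideal_gen R" by (rule ideal_gen.base)
lemma id_zero: "0 \<in> ideal_gen R" by (rule ideal_gen.zero)
lemma id_add: "a \<in> ideal_gen R \<Longrightarrow> b \<in> ideal_gen R \<Longrightarrow> a + b \<in> ideal_gen R" by (rule ideal_gen.add)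
lemma id_mult: "a \<in> ideal_gen R \<Longrightarrow> x * a * y \<in> ideal_gen R" by (rule ideal_gen.mult)
lemma id_lmult: "a \<in> ideal_gen R \<Longrightarrow> x * a \<in> ideal_gen R"
  using id_mult[of a R x 1] by simp
lemma id_rmult: "a \<in> ideal_gen R \<Longrightarrow> a * y \<in> ideal_gen R"
  using id_mult[of a R 1 y] by simp
lemma id_uminus: "a \<in> ideal_gen R \<Longrightarrow> - a \<in> ideal_gen R"
  using id_mult[of a R "-1" 1] by simp
lemma id_diff: "a \<in> ideal_gen R \<Longrightarrow> b \<in> ideal_gen R \<Longrightarrow> a - b \<in> ideal_gen R"
  using id_add[OF _ id_uminus] by (simp add: id_add id_uminus)
lemma id_sum: "(\<And>x. x \<in> A \<Longrightarrow> f x \<in> ideal_gen R) \<Longrightarrow> sum f A \<in> ideal_gen R"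
proof (induction A rule: infinite_finite_induct)
  case (infinite A) then show ?case by (simp add: id_zero)
next
  case empty then show ?case by (simp add: id_zero)
next
  case (insert x F) then show ?case by (simp add: id_add)
qed

definition eqv :: "('k::ring_1, 'g) freealg set \<Rightarrow> ('k, 'g) freealg \<Rightarrow> ('k, 'g) freealg \<Rightarrow> bool" where
  "eqv J a b \<longleftrightarrow> a - b \<in> J"

lemma eqv_refl[simp]: "eqv (ideal_gen R) a a" by (simp add: eqv_def id_zero)
lemma eqv_eq: "a = b \<Longrightarrow> eqv (ideal_gen R) a b" by simp
lemma eqv_sym: "eqv (ideal_gen R) a b \<Longrightarrow> eqv (ideal_gen R) b a"
  unfolding eqv_def by (drule id_uminus) simp
lemma eqv_trans[trans]: "eqv (ideal_gen R) a b \<Longrightarrow> eqv (ideal_gen R) b c \<Longrightarrow> eqv (ideal_gen R) a c"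
  unfolding eqv_def by (drule (1) id_add) simp
lemma eqv_add: "eqv (ideal_gen R) a a' \<Longrightarrow> eqv (ideal_gen R) b b' \<Longrightarrow> eqv (ideal_gen R) (a + b) (a' + b')"
  unfolding eqv_def by (drule (1) id_add) (simp add: algebra_simps)
lemma eqv_diff: "eqv (ideal_gen R) a a' \<Longrightarrow> eqv (ideal_gen R) b b' \<Longrightarrow> eqv (ideal_gen R) (a - b) (a' - b')"
  unfolding eqv_def by (drule (1) id_diff) (simp add: algebra_simps)
lemma eqv_uminus: "eqv (ideal_gen R) a a' \<Longrightarrow> eqv (ideal_gen R) (- a) (- a')"
  unfolding eqv_def by (drule id_uminus) (simp add: algebra_simps)
lemma eqv_mult: "eqv (ideal_gen R) a a' \<Longrightarrow> eqv (ideal_gen R) b b' \<Longrightarrow> eqv (ideal_gen R) (a * b) (a' * b')"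
proof -
  assume "eqv (ideal_gen R) a a'" "eqv (ideal_gen R) b b'"
  then have "(a - a') * b + a' * (b - b') \<in> ideal_gen R"
    unfolding eqv_def by (intro id_add id_lmult id_rmult)
  then show ?thesis unfolding eqv_def by (simp add: algebra_simps)
qed
lemma eqv_lmult: "eqv (ideal_gen R) b b' \<Longrightarrow> eqv (ideal_gen R) (a * b) (a * b')"
  by (rule eqv_mult) auto
lemma eqv_rmult: "eqv (ideal_gen R) a a' \<Longrightarrow> eqv (ideal_gen R) (a * b) (a' * b)"
  by (rule eqv_mult) auto
lemma eqv_sum: "(\<And>x. x \<in> A \<Longrightarrow> eqv (ideal_gen R) (f x) (g x)) \<Longrightarrow> eqv (ideal_gen R) (sum f A) (sum g A)"
proof (induction A rule: infinite_finite_induct)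
  case (insert x F) then show ?case by (simp add: eqv_add)
qed auto
lemma eqv_0I: "a \<in> ideal_gen R \<Longrightarrow> eqv (ideal_gen R) a 0" by (simp add: eqv_def)
lemma eqv_base: "a - b \<in> R \<Longrightarrow> eqv (ideal_gen R) a b" by (simp add: eqv_def id_base)

lemma qh_cong: "quot_alg_hom I J F \<Longrightarrow> eqv I a b \<Longrightarrow> eqv J (F a) (F b)"
  by (simp add: quot_alg_hom_def eqv_def)
lemma qh_add: "quot_alg_hom I J F \<Longrightarrow> eqv J (F (a + b)) (F a + F b)"
  by (simp add: quot_alg_hom_def eqv_def)
lemma qh_mult: "quot_alg_hom I J F \<Longrightarrow> eqv J (F (a * b)) (F a * F b)"
  by (simp add: quot_alg_hom_def eqv_def)
lemma qh_fsc: "quot_alg_hom I J F \<Longrightarrow> eqv J (F (fsc c * a)) (fsc c * F a)"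
  by (simp add: quot_alg_hom_def eqv_def)
lemma qh_one: "quot_alg_hom I J F \<Longrightarrow> eqv J (F 1) 1"
  by (simp add: quot_alg_hom_def eqv_def)

lemma qh_zero: assumes "quot_alg_hom I (ideal_gen S) F" shows "eqv (ideal_gen S) (F 0) 0"
proof -
  have "(F (0 + 0) - (F 0 + F 0)) \<in> ideal_gen S" using assms unfolding quot_alg_hom_def by blast
  then have "- (F 0) \<in> ideal_gen S" by (simp add: algebra_simps)
  then show ?thesis using id_uminus unfolding eqv_def by fastforce
qed

lemma qh_sum: assumes "quot_alg_hom I (ideal_gen S) F"
  shows "eqv (ideal_gen S) (F (sum f A)) (\<Sum>x\<in>A. F (f x))"
proof (induction A rule: infinite_finite_induct)
  case (infinite A) then show ?case using qh_zero[OF assms] by simp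
next
  case empty then show ?case using qh_zero[OF assms] by simp
next
  case (insert x A)
  have "eqv (ideal_gen S) (F (sum f (insert x A))) (F (f x + sum f A))" using insert by simp
  also have "eqv (ideal_gen S) \<dots> (F (f x) + F (sum f A))" by (rule qh_add[OF assms])
  also have "eqv (ideal_gen S) \<dots> (F (f x) + (\<Sum>x\<in>A. F (f x)))" by (rule eqv_add[OF _ insert.IH]) simp
  finally show ?case using insert by simp
qed

lemma qh_comp:
  assumes F: "quot_alg_hom (ideal_gen R) (ideal_gen S) F" and G: "quot_alg_hom (ideal_gen S) (ideal_gen T) G"
  shows "quot_alg_hom (ideal_gen R) (ideal_gen T) (\<lambda>x. G (F x))"
proof -
  have c: "eqv (ideal_gen R) a b \<Longrightarrow> eqv (ideal_gen T) (G (F a)) (G (F b))" for a b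
    by (rule qh_cong[OF G], rule qh_cong[OF F])
  have a: "eqv (ideal_gen T) (G (F (a + b))) (G (F a) + G (F b))" for a b
    using eqv_trans[OF qh_cong[OF G qh_add[OF F]] qh_add[OF G]] .
  have m: "eqv (ideal_gen T) (G (F (a * b))) (G (F a) * G (F b))" for a b
    using eqv_trans[OF qh_cong[OF G qh_mult[OF F]] qh_mult[OF G]] .
  have s: "eqv (ideal_gen T) (G (F (fsc c * a))) (fsc c * G (F a))" for c a
    using eqv_trans[OF qh_cong[OF G qh_fsc[OF F]] qh_fsc[OF G]] .
  have o: "eqv (ideal_gen T) (G (F 1)) 1"
    using eqv_trans[OF qh_cong[OF G qh_one[OF F]] qh_one[OF G]] .
  show ?thesis using c a m s o unfolding quot_alg_hom_def eqv_def by blast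
qed

lemma pm_expand: "a = (\<Sum>r\<in>Poly_Mapping.keys a. Poly_Mapping.single r (Poly_Mapping.lookup a r))"
proof -
  have *: "finite I \<Longrightarrow> Poly_Mapping.lookup (\<Sum>r\<in>I. Poly_Mapping.single r (Poly_Mapping.lookup a r)) j =
            (if j \<in> I then Poly_Mapping.lookup a j else 0)" for I j
    by (induction I rule: finite_induct) (auto simp: lookup_single lookup_add when_def)
  show ?thesis by (rule poly_mapping_eqI) (simp add: * in_keys_iff)
qed

lemma fsc_single: "fsc c * Poly_Mapping.single w (1::'k::ring_1) = Poly_Mapping.single w c"
  by (simp add: fsc_def mult_single)

definition wordprod :: "'g list \<Rightarrow> ('k::ring_1, 'g) freealg" where
  "wordprod l = foldr (\<lambda>g acc. gen g * acc) l 1"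

lemma single_word: "Poly_Mapping.single (Abs_word l) (1::'k::ring_1) = (wordprod l :: ('k,'g) freealg)"
proof (induction l)
  case Nil then show ?case
    by (simp add: wordprod_def zero_word_def[symmetric])
next
  case (Cons g l)
  have "letter g + Abs_word l = Abs_word (g # l)"
    by (simp add: letter_def plus_word_def Abs_word_inverse)
  then have "Poly_Mapping.single (Abs_word (g # l)) (1::'k) = gen g * Poly_Mapping.single (Abs_word l) 1"
    by (simp add: gen_def mult_single)
  then show ?case using Cons
    by (simp add: wordprod_def)
qed

lemma hom_id_on_gens:
  fixes a :: "('k::ring_1, 'g) freealg"
  assumes F: "quot_alg_hom (ideal_gen R) (ideal_gen R) F"
    and g: "\<And>g. eqv (ideal_gen R) (F (gen g)) (gen g)"
  shows "eqv (ideal_gen R) (F a) a"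
proof -
  have w: "eqv (ideal_gen R) (F (wordprod l)) (wordprod l)" for l
  proof (induction l)
    case Nil then show ?case using qh_one[OF F] by (simp add: wordprod_def)
  next
    case (Cons x l)
    have "eqv (ideal_gen R) (F (wordprod (x # l))) (F (gen x) * F (wordprod l))"
      unfolding wordprod_def using qh_mult[OF F] by simp
    also have "eqv (ideal_gen R) \<dots> (gen x * wordprod l)" by (rule eqv_mult[OF g Cons])
    finally show ?case by (simp add: wordprod_def)
  qed
  have s: "Poly_Mapping.single w (1::'k) = wordprod (Rep_word w)" for w :: "'g word"
    by (metis single_word Rep_word_inverse)
  have e: "a = (\<Sum>r\<in>Poly_Mapping.keys a. fsc (Poly_Mapping.lookup a r) * wordprod (Rep_word r))"
    apply (subst pm_expand[of a])
    apply (rule sum.cong[OF refl])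
    apply (simp only: s[symmetric] fsc_single)
    done
  have "eqv (ideal_gen R) (F a) (F (\<Sum>r\<in>Poly_Mapping.keys a. fsc (Poly_Mapping.lookup a r) * wordprod (Rep_word r)))"
    by (rule eqv_eq, rule arg_cong[OF e])
  also have "eqv (ideal_gen R) \<dots> (\<Sum>r\<in>Poly_Mapping.keys a. F (fsc (Poly_Mapping.lookup a r) * wordprod (Rep_word r)))"
    by (rule qh_sum[OF F])
  also have "eqv (ideal_gen R) \<dots> (\<Sum>r\<in>Poly_Mapping.keys a. fsc (Poly_Mapping.lookup a r) * wordprod (Rep_word r))"
    by (rule eqv_sum, rule eqv_trans[OF qh_fsc[OF F]], rule eqv_lmult[OF w])
  also have "\<dots> = a" using e by simp
  finally show ?thesis .
qed


lemma finite_mi: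
  assumes "\<And>i. finite (B i)"
  shows "finite {m :: 'n::finite \<Rightarrow>\<^sub>0 nat. \<forall>i. Poly_Mapping.lookup m i \<in> B i}"
proof -
  have "Poly_Mapping.lookup ` {m :: 'n::finite \<Rightarrow>\<^sub>0 nat. \<forall>i. Poly_Mapping.lookup m i \<in> B i} \<subseteq> PiE UNIV B"
    by (auto simp: PiE_def extensional_def)
  moreover have "finite (PiE UNIV B)" using assms by (simp add: finite_PiE)
  ultimately show ?thesis
    by (metis (no_types, lifting) finite_imageD finite_subset inj_onI lookup_inject)
qed

lemma sum_prod_mi:
  fixes f :: "'n::finite \<Rightarrow> nat \<Rightarrow> 'a::comm_semiring_1"
  assumes fin: "\<And>i. finite (B i)"
  shows "(\<Sum>m\<in>{m. \<forall>i. Poly_Mapping.lookup m i \<in> B i}. \<Prod>i\<in>UNIV. f i (Poly_Mapping.lookup m i))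
       = (\<Prod>i\<in>UNIV. \<Sum>t\<in>B i. f i t)"
proof -
  have bij: "bij_betw Poly_Mapping.lookup {m. \<forall>i. Poly_Mapping.lookup m i \<in> B i} (PiE UNIV B)"
  proof (rule bij_betw_imageI)
    show "inj_on Poly_Mapping.lookup {m. \<forall>i. Poly_Mapping.lookup m i \<in> B i}"
      by (rule inj_onI) simp
    show "Poly_Mapping.lookup ` {m. \<forall>i. Poly_Mapping.lookup m i \<in> B i} = PiE UNIV B"
    proof
      show "Poly_Mapping.lookup ` {m. \<forall>i. Poly_Mapping.lookup m i \<in> B i} \<subseteq> PiE UNIV B"
        by (auto simp: PiE_def extensional_def)
      show "PiE UNIV B \<subseteq> Poly_Mapping.lookup ` {m. \<forall>i. Poly_Mapping.lookup m i \<in> B i}"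
      proof
        fix g assume g: "g \<in> PiE UNIV B"
        have ag: "Poly_Mapping.lookup (Abs_poly_mapping g) = g" by simp
        show "g \<in> Poly_Mapping.lookup ` {m. \<forall>i. Poly_Mapping.lookup m i \<in> B i}"
          by (rule image_eqI[where f=Poly_Mapping.lookup and x="Abs_poly_mapping g", OF ag[symmetric]]) (use g in \<open>auto simp: PiE_def Pi_def\<close>)
      qed
    qed
  qed
  have "(\<Prod>i\<in>UNIV. \<Sum>t\<in>B i. f i t) = (\<Sum>g\<in>PiE UNIV B. \<Prod>i\<in>UNIV. f i (g i))"
    by (rule prod_sum_PiE) (simp_all add: fin)
  also have "\<dots> = (\<Sum>m\<in>{m. \<forall>i. Poly_Mapping.lookup m i \<in> B i}. \<Prod>i\<in>UNIV. f i (Poly_Mapping.lookup m i))"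
    by (rule sum.reindex_bij_betw[OF bij, symmetric])
  finally show ?thesis by (rule sym)
qed

lemma alt1:
  assumes "l \<le> m"
  shows "(\<Sum>t\<in>{l..m}. of_nat (m choose t) * (-1)^(t-l) * of_nat (t choose l)) = (if l = m then 1 else (0::'a::comm_ring_1))"
proof -
  have "{l..m} = (\<lambda>u. u + l) ` {..m-l}" using assms
    by (simp add: atMost_atLeast0 image_add_atLeastAtMost)
  then have "(\<Sum>t\<in>{l..m}. of_nat (m choose t) * (-1)^(t-l) * of_nat (t choose l))
      = (\<Sum>u\<in>{..m-l}. of_nat (m choose (u+l)) * (-1)^u * of_nat ((u+l) choose l) :: 'a)"
    by (simp add: sum.reindex inj_on_def)
  also have "\<dots> = (\<Sum>u\<in>{..m-l}. of_nat (m choose l) * ((-1)^u * of_nat ((m-l) choose u)))"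
  proof (rule sum.cong[OF refl])
    fix u assume "u \<in> {..m-l}"
    then have "(m choose (u+l)) * ((u+l) choose l) = (m choose l) * ((m - l) choose u)"
      using choose_mult[of l "u+l" m] assms by simp
    then have "(of_nat (m choose (u+l)) * of_nat ((u+l) choose l) :: 'a) = of_nat (m choose l) * of_nat ((m - l) choose u)"
      by (metis of_nat_mult)
    then show "of_nat (m choose (u+l)) * (-1)^u * of_nat ((u+l) choose l) = (of_nat (m choose l) * ((-1)^u * of_nat ((m-l) choose u)) :: 'a)"
      by (simp add: algebra_simps)
  qed
  also have "\<dots> = of_nat (m choose l) * (\<Sum>u\<le>m-l. (-1)^u * of_nat ((m-l) choose u))"
    by (simp add: sum_distrib_left)
  also have "\<dots> = (if l = m then 1 else 0)"
  proof (cases "l = m")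
    case True then show ?thesis by simp
  next
    case False then have "m - l > 0" using assms by simp
    then show ?thesis using False choose_alternating_sum[of "m-l", where 'a='a] by simp
  qed
  finally show ?thesis .
qed

lemma alt2:
  assumes "l \<le> m"
  shows "(\<Sum>t\<in>{l..m}. (-1)^(m-t) * of_nat (m choose t) * of_nat (t choose l)) = (if l = m then 1 else (0::'a::comm_ring_1))"
proof -
  have "(\<Sum>t\<in>{l..m}. (-1)^(m-t) * of_nat (m choose t) * of_nat (t choose l))
     = (\<Sum>t\<in>{l..m}. (-1)^(m-l) * (of_nat (m choose t) * (-1)^(t-l) * of_nat (t choose l)) :: 'a)"
  proof (rule sum.cong[OF refl])
    fix t assume t: "t \<in> {l..m}"
    have e: "m - l = (m - t) + (t - l)" using t by auto
    have sq: "(-1::'a)^(t-l) * (-1)^(t-l) = 1"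
      by (simp add: power_mult_distrib[symmetric])
    have "(-1::'a)^(m-l) * (-1)^(t-l) = (-1)^(m-t) * ((-1)^(t-l) * (-1)^(t-l))"
      unfolding e power_add by (simp only: mult.assoc)
    then have sg: "(-1::'a)^(m-l) * (-1)^(t-l) = (-1)^(m-t)" unfolding sq by simp
    show "(-1)^(m-t) * of_nat (m choose t) * of_nat (t choose l) = ((-1)^(m-l) * (of_nat (m choose t) * (-1)^(t-l) * of_nat (t choose l)) :: 'a)"
      unfolding sg[symmetric] by (simp only: mult_ac)
  qed
  also have "\<dots> = (-1)^(m-l) * (\<Sum>t\<in>{l..m}. of_nat (m choose t) * (-1)^(t-l) * of_nat (t choose l))"
    by (rule sum_distrib_left[symmetric])
  also have "\<dots> = (-1)^(m-l) * (if l = m then 1 else 0)"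
    by (simp only: alt1[OF assms])
  finally show ?thesis by simp
qed


lemma ivl_eq: "{j. mle l j \<and> mle j m} = {j. \<forall>i. Poly_Mapping.lookup j i \<in> {Poly_Mapping.lookup l i..Poly_Mapping.lookup m i}}"
  by (auto simp: mle_def)

lemma finite_ivl: "finite {j :: 'n::finite \<Rightarrow>\<^sub>0 nat. mle l j \<and> mle j m}"
  unfolding ivl_eq by (rule finite_mi) simp

lemma finite_mle: "finite {j :: 'n::finite \<Rightarrow>\<^sub>0 nat. mle j m}"
proof -
  have "{j :: 'n::finite \<Rightarrow>\<^sub>0 nat. mle j m} = {j. mle 0 j \<and> mle j m}" by (auto simp: mle_def)
  then show ?thesis using finite_ivl by simp
qed

lemma sign_prod: "((-1::'a::comm_ring_1) ^ msize (m - j)) = (\<Prod>i\<in>UNIV. (-1) ^ (Poly_Mapping.lookup m i - Poly_Mapping.lookup j i))"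
  by (simp add: msize_def lookup_minus power_sum)

lemma mbinom_prod: "(of_nat (mbinom m j) :: 'a::comm_ring_1) = (\<Prod>i\<in>UNIV. of_nat (Poly_Mapping.lookup m i choose Poly_Mapping.lookup j i))"
  by (simp add: mbinom_def)

lemma prod_delta_eq:
  "(\<Prod>i\<in>UNIV. if Poly_Mapping.lookup l i = Poly_Mapping.lookup m i then 1 else (0::'a::comm_ring_1)) = (if l = (m :: 'n::finite \<Rightarrow>\<^sub>0 nat) then 1 else 0)"
proof (cases "l = m")
  case True then show ?thesis by simp
next
  case False
  have "\<exists>i. Poly_Mapping.lookup l i \<noteq> Poly_Mapping.lookup m i"
    using False poly_mapping_eqI by metis
  then obtain i where "Poly_Mapping.lookup l i \<noteq> Poly_Mapping.lookup m i" ..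
  then have "(\<Prod>i\<in>UNIV. if Poly_Mapping.lookup l i = Poly_Mapping.lookup m i then 1 else (0::'a)) = 0"
    by (intro prod_zero) auto
  then show ?thesis using False by simp
qed

lemma MI1:
  assumes "mle l m"
  shows "(\<Sum>j\<in>{j. mle l j \<and> mle j m}. (-1)^msize (m - j) * of_nat (mbinom m j) * of_nat (mbinom j l))
        = (if l = (m :: 'n::finite \<Rightarrow>\<^sub>0 nat) then 1 else (0::'a::comm_ring_1))"
proof -
  have "(\<Sum>j\<in>{j. mle l j \<and> mle j m}. (-1)^msize (m - j) * of_nat (mbinom m j) * of_nat (mbinom j l))
     = (\<Sum>j\<in>{j. \<forall>i. Poly_Mapping.lookup j i \<in> {Poly_Mapping.lookup l i..Poly_Mapping.lookup m i}}.
          \<Prod>i\<in>UNIV. (\<lambda>i t. (-1) ^ (Poly_Mapping.lookup m i - t) * of_nat (Poly_Mapping.lookup m i choose t)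
              * of_nat (t choose Poly_Mapping.lookup l i)) i (Poly_Mapping.lookup j i) :: 'a)"
    unfolding ivl_eq sign_prod mbinom_prod by (rule sum.cong[OF refl]) (simp only: prod.distrib)
  also have "\<dots> = (\<Prod>i\<in>UNIV. \<Sum>t\<in>{Poly_Mapping.lookup l i..Poly_Mapping.lookup m i}.
          (-1) ^ (Poly_Mapping.lookup m i - t) * of_nat (Poly_Mapping.lookup m i choose t)
              * of_nat (t choose Poly_Mapping.lookup l i))"
    by (rule sum_prod_mi) simp
  also have "\<dots> = (\<Prod>i\<in>UNIV. if Poly_Mapping.lookup l i = Poly_Mapping.lookup m i then 1 else 0)"
    using assms by (intro prod.cong[OF refl] alt2) (simp add: mle_def)
  also have "\<dots> = (if l = m then 1 else 0)" by (rule prod_delta_eq)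
  finally show ?thesis .
qed

lemma MI2:
  assumes "mle j k"
  shows "(\<Sum>m\<in>{m. mle j m \<and> mle m k}. of_nat (mbinom k m) * (-1)^msize (m - j) * of_nat (mbinom m j))
        = (if j = (k :: 'n::finite \<Rightarrow>\<^sub>0 nat) then 1 else (0::'a::comm_ring_1))"
proof -
  have "(\<Sum>m\<in>{m. mle j m \<and> mle m k}. of_nat (mbinom k m) * (-1)^msize (m - j) * of_nat (mbinom m j))
     = (\<Sum>m\<in>{m. \<forall>i. Poly_Mapping.lookup m i \<in> {Poly_Mapping.lookup j i..Poly_Mapping.lookup k i}}.
          \<Prod>i\<in>UNIV. (\<lambda>i t. of_nat (Poly_Mapping.lookup k i choose t) * (-1) ^ (t - Poly_Mapping.lookup j i)
              * of_nat (t choose Poly_Mapping.lookup j i)) i (Poly_Mapping.lookup m i) :: 'a)"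
    unfolding ivl_eq sign_prod mbinom_prod by (rule sum.cong[OF refl]) (simp only: prod.distrib)
  also have "\<dots> = (\<Prod>i\<in>UNIV. \<Sum>t\<in>{Poly_Mapping.lookup j i..Poly_Mapping.lookup k i}.
          of_nat (Poly_Mapping.lookup k i choose t) * (-1) ^ (t - Poly_Mapping.lookup j i)
              * of_nat (t choose Poly_Mapping.lookup j i))"
    by (rule sum_prod_mi) simp
  also have "\<dots> = (\<Prod>i\<in>UNIV. if Poly_Mapping.lookup j i = Poly_Mapping.lookup k i then 1 else 0)"
    using assms by (intro prod.cong[OF refl] alt1) (simp add: mle_def)
  also have "\<dots> = (if j = k then 1 else 0)" by (rule prod_delta_eq)
  finally show ?thesis .
qed


lemma fsc_1[simp]: "fsc 1 = 1" by (simp add: fsc_def)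
lemma fsc_0[simp]: "fsc 0 = 0" by (simp add: fsc_def)
lemma fsc_mult: "fsc a * fsc b = fsc (a * b)" by (simp add: fsc_def mult_single)
lemma fsc_add: "fsc (a + b) = fsc a + fsc b" by (simp add: fsc_def single_add)
lemma fsc_sum: "fsc (sum f A) = (\<Sum>x\<in>A. fsc (f x))"
  by (induction A rule: infinite_finite_induct) (simp_all add: fsc_add)

lemma fsc_comm: "fsc c * x = x * (fsc c :: ('k::comm_ring_1, 'g) freealg)"
proof -
  have "fsc c * x = (\<Sum>r\<in>Poly_Mapping.keys x. fsc c * Poly_Mapping.single r (Poly_Mapping.lookup x r))"
    by (subst pm_expand[of x]) (simp add: sum_distrib_left)
  also have "\<dots> = (\<Sum>r\<in>Poly_Mapping.keys x. Poly_Mapping.single r (Poly_Mapping.lookup x r) * fsc c)"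
    by (rule sum.cong[OF refl]) (simp add: fsc_def mult_single mult.commute)
  also have "\<dots> = x * fsc c"
    by (subst (3) pm_expand[of x]) (simp add: sum_distrib_right)
  finally show ?thesis .
qed

lemma xm_mult: "xm a * xm b = (xm (a + b) :: ('k::comm_ring_1, 'n) pol)"
  by (simp add: xm_def mult_single)
lemma xm_0: "xm 0 = (1 :: ('k::comm_ring_1, 'n) pol)"
  by (simp add: xm_def)
lemma psc_xm: "psc c * xm r = (Poly_Mapping.single r c :: ('k::comm_ring_1, 'n) pol)"
  by (simp add: xm_def psc_def mult_single)
lemma psc_0[simp]: "psc 0 = 0" by (simp add: psc_def)

lemma pol_expand: "(f :: ('k::comm_ring_1, 'n) pol) = (\<Sum>r\<in>Poly_Mapping.keys f. psc (Poly_Mapping.lookup f r) * xm r)"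
  by (subst pm_expand[of f]) (simp add: psc_xm)

lemma foldr_zero: "foldr (\<lambda>j acc. a j ^ Poly_Mapping.lookup 0 j * acc) xs 1 = (1::'b::monoid_mult)"
  by (induction xs) simp_all

lemma oprod_0: "oprod a 0 = 1"
  unfolding oprod_def by (rule foldr_zero)

lemma foldr_single:
  "distinct xs \<Longrightarrow> foldr (\<lambda>j acc. a j ^ Poly_Mapping.lookup (Poly_Mapping.single i 1) j * acc) xs 1
     = (if i \<in> set xs then a i else (1 :: 'b::monoid_mult))"
proof (induction xs)
  case Nil then show ?case by simp
next
  case (Cons x xs)
  show ?case
  proof (cases "x = i")
    case True
    then have "i \<notin> set xs" using Cons by simp
    then show ?thesis using Cons True by (simp add: lookup_single)
  next
    case False then show ?thesis using Cons by (simp add: lookup_single)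
  qed
qed

lemma oprod_single: "oprod a (Poly_Mapping.single i 1) = a i"
  unfolding oprod_def by (subst foldr_single) simp_all

lemma Dxd_split: "Dxd r s = Dxd r 0 * Dxd 0 s"
  by (simp add: Dxd_def oprod_0)

lemma Dxd_00: "Dxd 0 0 = 1" by (simp add: Dxd_def oprod_0)

lemma Aemb_xm: "Aemb (xm r :: ('k::field, 'n::{finite,linorder}) pol) = Dxd r 0"
  by (simp add: Aemb_def xm_def)

lemma GX_Dxd: "gen (GX i) = Dxd (Poly_Mapping.single i 1) 0"
  by (simp only: Dxd_def oprod_0 oprod_single mult_1_right)
lemma GD_Dxd: "gen (GD i) = Dxd 0 (Poly_Mapping.single i 1)"
  by (simp only: Dxd_def oprod_0 oprod_single mult_1_left)

definition comm where "comm R c d \<longleftrightarrow> eqv (ideal_gen R) (c * d) (d * c)"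

lemma comm_1: "comm R c 1" by (simp add: comm_def)
lemma comm_mult:
  assumes "comm R c d1" "comm R c d2" shows "comm R c (d1 * d2)"
proof -
  have "eqv (ideal_gen R) (c * (d1 * d2)) ((c * d1) * d2)" by (simp add: mult.assoc)
  also have "eqv (ideal_gen R) \<dots> ((d1 * c) * d2)" using assms(1) unfolding comm_def by (rule eqv_rmult)
  also have "\<dots> = d1 * (c * d2)" by (simp add: mult.assoc)
  also have "eqv (ideal_gen R) \<dots> (d1 * (d2 * c))" using assms(2) unfolding comm_def by (rule eqv_lmult)
  finally show ?thesis unfolding comm_def by (simp add: mult.assoc)
qed
lemma comm_power: "comm R c d \<Longrightarrow> comm R c (d ^ n)"
  by (induction n) (simp_all add: comm_1 comm_mult)
lemma comm_sym: "comm R c d \<Longrightarrow> comm R d c"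
  unfolding comm_def by (rule eqv_sym)

lemma comm_foldr:
  assumes "\<And>i. comm R c (a i)"
  shows "comm R c (foldr (\<lambda>j acc. a j ^ Poly_Mapping.lookup s j * acc) xs 1)"
  by (induction xs) (simp_all add: comm_1 comm_mult comm_power assms)

lemma foldr_add:
  assumes ac: "\<And>i j. comm R (a i) (a j)"
  shows "eqv (ideal_gen R) (foldr (\<lambda>j acc. a j ^ Poly_Mapping.lookup r j * acc) xs 1 * foldr (\<lambda>j acc. a j ^ Poly_Mapping.lookup s j * acc) xs 1)
          (foldr (\<lambda>j acc. a j ^ Poly_Mapping.lookup (r + s) j * acc) xs 1)"
proof (induction xs)
  case Nil then show ?case by simp
next
  case (Cons x xs)
  define P where "P t = foldr (\<lambda>j acc. a j ^ Poly_Mapping.lookup t j * acc) xs 1" for t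
  have cP: "comm R (a x ^ Poly_Mapping.lookup s x) (P r)"
    unfolding P_def by (rule comm_foldr, rule comm_sym, rule comm_power, rule ac)
  have "(a x ^ Poly_Mapping.lookup r x * P r) * (a x ^ Poly_Mapping.lookup s x * P s)
      = a x ^ Poly_Mapping.lookup r x * (P r * a x ^ Poly_Mapping.lookup s x) * P s"
    by (simp add: mult.assoc)
  also have "eqv (ideal_gen R) \<dots> (a x ^ Poly_Mapping.lookup r x * (a x ^ Poly_Mapping.lookup s x * P r) * P s)"
    using cP unfolding comm_def by (rule eqv_rmult[OF eqv_lmult[OF eqv_sym]])
  also have "\<dots> = a x ^ Poly_Mapping.lookup (r + s) x * (P r * P s)"
    by (simp add: mult.assoc lookup_add power_add)
  also have "eqv (ideal_gen R) \<dots> (a x ^ Poly_Mapping.lookup (r + s) x * P (r + s))"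
    using Cons unfolding P_def by (rule eqv_lmult)
  finally show ?case unfolding P_def by simp
qed

lemma oprod_add:
  assumes "\<And>i j. comm R (a i) (a j)"
  shows "eqv (ideal_gen R) (oprod a r * oprod a s) (oprod a (r + s))"
  unfolding oprod_def by (rule foldr_add[OF assms])

abbreviation "SI \<equiv> ideal_gen smash_rel"
abbreviation "TI \<equiv> ideal_gen tens_rel"

lemma sA_add: "eqv SI (gen (GA (f + g))) (gen (GA f) + gen (GA g))"
proof -
  have "gen (GA (f + g)) - gen (GA f) - gen (GA g) \<in> smash_rel" unfolding smash_rel_def by blast
  then show ?thesis by (intro eqv_base) (simp add: diff_diff_eq)
qed
lemma sA_smul: "eqv SI (gen (GA (psc c * f))) (fsc c * gen (GA f))"
proof -
  have "gen (GA (psc c * f)) - fsc c * gen (GA f) \<in> smash_rel" unfolding smash_rel_def by blast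
  then show ?thesis by (intro eqv_base)
qed
lemma sA_mult: "eqv SI (gen (GA f) * gen (GA g)) (gen (GA (f * g)))"
proof -
  have "gen (GA f) * gen (GA g) - gen (GA (f * g)) \<in> smash_rel" unfolding smash_rel_def by blast
  then show ?thesis by (intro eqv_base)
qed
lemma sA_1: "eqv SI (gen (GA 1)) 1"
proof -
  have "gen (GA 1) - 1 \<in> smash_rel" unfolding smash_rel_def by blast
  then show ?thesis by (intro eqv_base)
qed
lemma sV_add: "eqv SI (gen (GV (xi + eta))) (gen (GV xi) + gen (GV eta))"
proof -
  have "gen (GV (\<lambda>i. xi i + eta i)) - gen (GV xi) - gen (GV eta) \<in> smash_rel" unfolding smash_rel_def by blast
  moreover have "(\<lambda>i. xi i + eta i) = xi + eta" by (simp add: fun_eq_iff)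
  ultimately show ?thesis by (intro eqv_base) (simp add: diff_diff_eq)
qed
lemma sV_smul: "eqv SI (gen (GV (vsc c eta))) (fsc c * gen (GV eta))"
proof -
  have "gen (GV (vsc c eta)) - fsc c * gen (GV eta) \<in> smash_rel" unfolding smash_rel_def by blast
  then show ?thesis by (intro eqv_base)
qed

lemma sA_0: "eqv SI (gen (GA 0)) 0"
proof -
  have "eqv SI (gen (GA 0)) (gen (GA 0) + gen (GA 0))" using sA_add[of 0 0] by simp
  then have "eqv SI (gen (GA 0) - gen (GA 0)) (gen (GA 0) + gen (GA 0) - gen (GA 0))"
    by (rule eqv_diff) simp
  then have "eqv SI 0 (gen (GA 0))" by simp
  then show ?thesis by (rule eqv_sym)
qed

lemma sA_sum: "eqv SI (gen (GA (sum f A))) (\<Sum>x\<in>A. gen (GA (f x)))"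
proof (induction A rule: infinite_finite_induct)
  case (infinite A) then show ?case using sA_0 by simp
next
  case empty then show ?case using sA_0 by simp
next
  case (insert x A)
  have "eqv SI (gen (GA (sum f (insert x A)))) (gen (GA (f x)) + gen (GA (sum f A)))"
    using insert sA_add by simp
  also have "eqv SI \<dots> (gen (GA (f x)) + (\<Sum>x\<in>A. gen (GA (f x))))"
    by (rule eqv_add[OF eqv_refl insert.IH])
  finally show ?case using insert by simp
qed

lemma sA_expand: "eqv SI (gen (GA f)) (\<Sum>r\<in>Poly_Mapping.keys f. fsc (Poly_Mapping.lookup f r) * gen (GA (xm r)))"
proof -
  have "eqv SI (gen (GA f)) (gen (GA (\<Sum>r\<in>Poly_Mapping.keys f. psc (Poly_Mapping.lookup f r) * xm r)))"
    by (subst pol_expand[of f]) simp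
  also have "eqv SI \<dots> (\<Sum>r\<in>Poly_Mapping.keys f. gen (GA (psc (Poly_Mapping.lookup f r) * xm r)))"
    by (rule sA_sum)
  also have "eqv SI \<dots> (\<Sum>r\<in>Poly_Mapping.keys f. fsc (Poly_Mapping.lookup f r) * gen (GA (xm r)))"
    by (rule eqv_sum, rule sA_smul)
  finally show ?thesis .
qed

lemma sA_xm: "eqv SI (gen (GA (xm a)) * gen (GA (xm b))) (gen (GA (xm (a + b))))"
  using sA_mult[of "xm a" "xm b"] by (simp add: xm_mult)

lemma sA_xm0: "eqv SI (gen (GA (xm 0))) 1"
  using sA_1 by (simp add: xm_0)

lemma tX_comm: "comm tens_rel (gen (GX i)) (gen (GX j))"
proof -
  have "gen (GX i) * gen (GX j) - gen (GX j) * gen (GX i) \<in> tens_rel" unfolding tens_rel_def by blast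
  then show ?thesis unfolding comm_def by (intro eqv_base)
qed
lemma tL_out: "eta \<notin> Lplus \<Longrightarrow> eqv TI (gen (GL eta)) 0"
proof -
  assume "eta \<notin> Lplus"
  then have "gen (GL eta) \<in> tens_rel" unfolding tens_rel_def by blast
  then show ?thesis by (intro eqv_base) simp
qed
lemma tL_add: "xi \<in> Lplus \<Longrightarrow> eta \<in> Lplus \<Longrightarrow> eqv TI (gen (GL (xi + eta))) (gen (GL xi) + gen (GL eta))"
proof -
  assume "xi \<in> Lplus" "eta \<in> Lplus"
  then have "gen (GL (\<lambda>i. xi i + eta i)) - gen (GL xi) - gen (GL eta) \<in> tens_rel" unfolding tens_rel_def by blast
  moreover have "(\<lambda>i. xi i + eta i) = xi + eta" by (simp add: fun_eq_iff)
  ultimately show ?thesis by (intro eqv_base) (simp add: diff_diff_eq)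
qed
lemma tL_smul: "eta \<in> Lplus \<Longrightarrow> eqv TI (gen (GL (vsc c eta))) (fsc c * gen (GL eta))"
proof -
  assume "eta \<in> Lplus"
  then have "gen (GL (vsc c eta)) - fsc c * gen (GL eta) \<in> tens_rel" unfolding tens_rel_def by blast
  then show ?thesis by (intro eqv_base)
qed

lemma X_add: "eqv TI (Dxd a 0 * Dxd b 0) (Dxd (a + b) 0)"
  using oprod_add[of tens_rel "\<lambda>i. gen (GX i)" a b, OF tX_comm] by (simp add: Dxd_def oprod_0)

lemma fun_sum_apply: "(sum f A) x = (\<Sum>a\<in>A. f a x)"
  by (induction A rule: infinite_finite_induct) simp_all

lemma vf_expand:
  "(eta :: ('k::comm_ring_1, 'n::finite) vf) = (\<Sum>p\<in>UNIV. \<Sum>k\<in>Poly_Mapping.keys (eta p). vsc (Poly_Mapping.lookup (eta p) k) (xd k p))"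
proof
  fix i
  have "(\<Sum>p\<in>UNIV. \<Sum>k\<in>Poly_Mapping.keys (eta p). vsc (Poly_Mapping.lookup (eta p) k) (xd k p)) i
      = (\<Sum>p\<in>UNIV. \<Sum>k\<in>Poly_Mapping.keys (eta p). if i = p then psc (Poly_Mapping.lookup (eta p) k) * xm k else 0)"
    unfolding fun_sum_apply vsc_def xd_def by (intro sum.cong refl) simp
  also have "\<dots> = (\<Sum>p\<in>UNIV. if i = p then (\<Sum>k\<in>Poly_Mapping.keys (eta p). psc (Poly_Mapping.lookup (eta p) k) * xm k) else 0)"
    by (rule sum.cong[OF refl]) simp
  also have "\<dots> = (\<Sum>k\<in>Poly_Mapping.keys (eta i). psc (Poly_Mapping.lookup (eta i) k) * xm k)"
    by simp
  also have "\<dots> = eta i" by (rule pol_expand[symmetric])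
  finally show "eta i = (\<Sum>p\<in>UNIV. \<Sum>k\<in>Poly_Mapping.keys (eta p). vsc (Poly_Mapping.lookup (eta p) k) (xd k p)) i" ..
qed

lemma closed_sum:
  assumes "P 0" "\<And>a b. P a \<Longrightarrow> P b \<Longrightarrow> P (a + b)" "\<And>x. x \<in> A \<Longrightarrow> P (f x)"
  shows "P (sum f A)"
  using assms(3)
proof (induction A rule: infinite_finite_induct)
  case (infinite A) then show ?case using assms(1) by simp
next
  case empty then show ?case using assms(1) by simp
next
  case (insert x F) then show ?case using assms(2) by simp
qed

lemma vf_induct:
  fixes eta :: "('k::comm_ring_1, 'n::finite) vf"
  assumes "P 0" "\<And>a b. P a \<Longrightarrow> P b \<Longrightarrow> P (a + b)"
    "\<And>c k p. k \<in> Poly_Mapping.keys (eta p) \<Longrightarrow> P (vsc c (xd k p))"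
  shows "P eta"
  apply (subst vf_expand[of eta])
  apply (rule closed_sum[where P=P])
    apply (rule assms(1))
   apply (erule (1) assms(2))
  apply (rule closed_sum[where P=P])
    apply (rule assms(1))
   apply (erule (1) assms(2))
  apply (erule assms(3))
  done

lemma vsc_0: "vsc 0 eta = 0" by (simp add: vsc_def fun_eq_iff)

lemma Lplus_add: "xi \<in> Lplus \<Longrightarrow> eta \<in> Lplus \<Longrightarrow> xi + eta \<in> Lplus"
  by (simp add: Lplus_def lookup_add)
lemma Lplus_0: "0 \<in> Lplus" by (simp add: Lplus_def)
lemma Lplus_xd: "k \<noteq> 0 \<Longrightarrow> xd k p \<in> Lplus"
  by (simp add: Lplus_def xd_def xm_def lookup_single)
lemma Lplus_vsc_xd: "k \<noteq> 0 \<Longrightarrow> vsc c (xd k p) \<in> Lplus"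
  by (simp add: Lplus_def vsc_def xd_def psc_xm lookup_single)
lemma Lplus_keys: "eta \<in> Lplus \<Longrightarrow> k \<in> Poly_Mapping.keys (eta p) \<Longrightarrow> k \<noteq> 0"
  by (auto simp: Lplus_def in_keys_iff)


lemma mle_refl: "mle m m" by (simp add: mle_def)
lemma mle_trans: "mle a b \<Longrightarrow> mle b c \<Longrightarrow> mle a c" unfolding mle_def using le_trans by blast
lemma mle_0: "mle 0 m" by (simp add: mle_def)
lemma mle_0_iff: "mle m 0 \<longleftrightarrow> m = 0"
  by (auto simp: mle_def intro: poly_mapping_eqI)
lemma mle_sub: "mle j m \<Longrightarrow> mle m k \<Longrightarrow> (k - m) + (m - j) = (k - j :: 'n \<Rightarrow>\<^sub>0 nat)"
  by (rule poly_mapping_eqI) (auto simp: mle_def lookup_add lookup_minus intro: le_trans)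
lemma sub_0: "(k :: 'n \<Rightarrow>\<^sub>0 nat) - 0 = k" by simp
lemma sub_self: "(k :: 'n \<Rightarrow>\<^sub>0 nat) - k = 0" by simp
lemma mbinom_0: "mbinom k 0 = 1" by (simp add: mbinom_def)
lemma mbinom_00: "mbinom 0 0 = 1" by (simp add: mbinom_def)
lemma msize_0: "msize 0 = 0" by (simp add: msize_def)

lemma oprod_single': "oprod a (Poly_Mapping.single i (Suc 0)) = a i"
  using oprod_single[of a i] by simp

lemma fsc_reassoc: "fsc c1 * X * (fsc c2 * Y * Z) = fsc (c1 * c2) * (X * Y) * (Z :: ('k::comm_ring_1, 'g) freealg)"
proof -
  have e: "X * fsc c2 = fsc c2 * X" by (rule fsc_comm[symmetric])
  have "fsc c1 * X * (fsc c2 * Y * Z) = fsc c1 * (X * fsc c2) * Y * Z"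
    by (simp only: mult.assoc)
  also have "\<dots> = fsc c1 * (fsc c2 * X) * Y * Z" by (simp only: e)
  also have "\<dots> = (fsc c1 * fsc c2) * (X * Y) * Z" by (simp only: mult.assoc)
  also have "\<dots> = fsc (c1 * c2) * (X * Y) * Z" by (simp only: fsc_mult)
  finally show ?thesis .
qed

lemma qh_fsc3:
  assumes F: "quot_alg_hom I (ideal_gen S) F"
  shows "eqv (ideal_gen S) (F (fsc c * a * b)) (fsc c * F a * F b)"
proof -
  have "eqv (ideal_gen S) (F (fsc c * (a * b))) (fsc c * F (a * b))" by (rule qh_fsc[OF F])
  also have "eqv (ideal_gen S) \<dots> (fsc c * (F a * F b))" by (rule eqv_lmult[OF qh_mult[OF F]])
  finally show ?thesis by (simp add: mult.assoc)
qed

locale L35 =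
  fixes \<phi> :: "('k::field, (('k, 'n::{finite,linorder}) pol, ('k, 'n) vf) sgen) freealg
               \<Rightarrow> ('k, ('n, ('k, 'n) vf) tgen) freealg"
    and \<psi> :: "('k, ('n, ('k, 'n) vf) tgen) freealg \<Rightarrow> ('k, (('k, 'n) pol, ('k, 'n) vf) sgen) freealg"
  assumes phi_hom: "quot_alg_hom smash_ideal tens_ideal \<phi>"
    and phi_A: "\<And>f. \<phi> (gen (GA f)) - Aemb f \<in> tens_ideal"
    and phi_V: "\<And>k p. \<phi> (gen (GV (xd k p))) -
          (Dxd k 0 * Dxd 0 (Poly_Mapping.single p 1)
           + (\<Sum>m\<in>{m. mle m k \<and> m \<noteq> 0}.
                fsc (of_nat (mbinom k m)) * Dxd (k - m) 0 * gen (GL (xd m p))))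
        \<in> tens_ideal"
    and psi_hom: "quot_alg_hom tens_ideal smash_ideal \<psi>"
    and psi_D: "\<And>r s. \<psi> (Dxd r s) -
          gen (GA (xm r)) * oprod (\<lambda>i. gen (GV (dvec i))) s \<in> smash_ideal"
    and psi_L: "\<And>m p. m \<noteq> 0 \<Longrightarrow> \<psi> (gen (GL (xd m p))) -
          (\<Sum>k\<in>{k. mle k m}.
             fsc ((-1) ^ msize (m - k) * of_nat (mbinom m k))
               * gen (GA (xm (m - k))) * gen (GV (xd k p)))
        \<in> smash_ideal"
begin

lemma phiH: "quot_alg_hom SI TI \<phi>" using phi_hom unfolding smash_ideal_def tens_ideal_def .
lemma psiH: "quot_alg_hom TI SI \<psi>" using psi_hom unfolding smash_ideal_def tens_ideal_def .
lemma phiA: "eqv TI (\<phi> (gen (GA f))) (Aemb f)" using phi_A[of f] unfolding eqv_def tens_ideal_def .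
lemma phiV: "eqv TI (\<phi> (gen (GV (xd k p))))
          (Dxd k 0 * Dxd 0 (Poly_Mapping.single p 1)
           + (\<Sum>m\<in>{m. mle m k \<and> m \<noteq> 0}.
                fsc (of_nat (mbinom k m)) * Dxd (k - m) 0 * gen (GL (xd m p))))"
  using phi_V[of k p] unfolding eqv_def tens_ideal_def .
lemma psiD: "eqv SI (\<psi> (Dxd r s)) (gen (GA (xm r)) * oprod (\<lambda>i. gen (GV (dvec i))) s)"
  using psi_D[of r s] unfolding eqv_def smash_ideal_def .
lemma psiL: assumes "m \<noteq> 0" shows "eqv SI (\<psi> (gen (GL (xd m p))))
          (\<Sum>k\<in>{k. mle k m}.
             fsc ((-1) ^ msize (m - k) * of_nat (mbinom m k))
               * gen (GA (xm (m - k))) * gen (GV (xd k p)))"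
  using psi_L[OF assms, of p] unfolding eqv_def smash_ideal_def .

lemma psiX: "eqv SI (\<psi> (Dxd r 0)) (gen (GA (xm r)))"
  using psiD[of r 0] unfolding oprod_0 mult_1_right .
lemma phiX: "eqv TI (\<phi> (gen (GA (xm r)))) (Dxd r 0)"
  using phiA[of "xm r"] unfolding Aemb_xm .

lemma smash_V:
  "eqv SI (\<psi> (\<phi> (gen (GV (xd k p))))) (gen (GV (xd k p)))"
proof -
  define A where "A r = (gen (GA (xm r)) :: ('k, (('k, 'n) pol, ('k, 'n) vf) sgen) freealg)" for r
  define V where "V j = (gen (GV (xd j p)) :: ('k, (('k, 'n) pol, ('k, 'n) vf) sgen) freealg)" for j
  define K where "K = {m. mle m k}"
  define M where "M = {m. mle m k \<and> m \<noteq> 0}"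
  define cf where "cf m j = (of_nat (mbinom k m) * (-1)^msize (m - j) * of_nat (mbinom m j) :: 'k)" for m j
  define H where "H m j = fsc (cf m j) * A (k - j) * V j" for m j
  have finK: "finite K" unfolding K_def by (rule finite_mle)
  have finM: "finite M" unfolding M_def using finite_mle[of k] by (auto intro: rev_finite_subset)
  have s1: "eqv SI (\<psi> (\<phi> (V k))) (\<psi> (Dxd k 0 * Dxd 0 (Poly_Mapping.single p 1)
           + (\<Sum>m\<in>M. fsc (of_nat (mbinom k m)) * Dxd (k - m) 0 * gen (GL (xd m p)))))"
    unfolding V_def M_def by (rule qh_cong[OF psiH phiV])
  have a: "eqv SI (\<psi> (Dxd k 0 * Dxd 0 (Poly_Mapping.single p 1))) (A k * V 0)"
    using psiD[of k "Poly_Mapping.single p 1"]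
    by (simp add: Dxd_split[symmetric] oprod_single' A_def V_def dvec_def)
  have b1: "eqv SI (\<psi> (fsc (of_nat (mbinom k m)) * Dxd (k - m) 0 * gen (GL (xd m p))))
       (\<Sum>j\<in>{j. mle j m}. H m j)" if m: "m \<in> M" for m
  proof -
    have "eqv SI (\<psi> (fsc (of_nat (mbinom k m)) * Dxd (k - m) 0 * gen (GL (xd m p))))
        (fsc (of_nat (mbinom k m)) * \<psi> (Dxd (k - m) 0) * \<psi> (gen (GL (xd m p))))"
      by (rule qh_fsc3[OF psiH])
    also have "eqv SI \<dots> (fsc (of_nat (mbinom k m)) * A (k - m) *
          (\<Sum>j\<in>{j. mle j m}. fsc ((-1) ^ msize (m - j) * of_nat (mbinom m j)) * A (m - j) * V j))"
      using m unfolding A_def V_def M_def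
      by (intro eqv_mult eqv_lmult psiX psiL) simp
    also have "\<dots> = (\<Sum>j\<in>{j. mle j m}. fsc (of_nat (mbinom k m)) * A (k - m) *
          (fsc ((-1) ^ msize (m - j) * of_nat (mbinom m j)) * A (m - j) * V j))"
      by (simp add: sum_distrib_left)
    also have "eqv SI \<dots> (\<Sum>j\<in>{j. mle j m}. H m j)"
    proof (rule eqv_sum)
      fix j assume j: "j \<in> {j. mle j m}"
      have "fsc (of_nat (mbinom k m)) * A (k - m) *
          (fsc ((-1) ^ msize (m - j) * of_nat (mbinom m j)) * A (m - j) * V j)
          = fsc (cf m j) * (A (k - m) * A (m - j)) * V j"
        unfolding fsc_reassoc by (simp only: cf_def mult.assoc)
      also have "eqv SI \<dots> (fsc (cf m j) * A (k - j) * V j)"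
      proof (intro eqv_rmult eqv_lmult)
        have "mle j m" "mle m k" using j m by (auto simp: M_def)
        then have "(k - m) + (m - j) = k - j" by (rule mle_sub)
        then show "eqv SI (A (k - m) * A (m - j)) (A (k - j))"
          using sA_xm[of "k - m" "m - j"] unfolding A_def by simp
      qed
      finally show "eqv SI (fsc (of_nat (mbinom k m)) * A (k - m) *
          (fsc ((-1) ^ msize (m - j) * of_nat (mbinom m j)) * A (m - j) * V j)) (H m j)"
        unfolding H_def .
    qed
    finally show ?thesis .
  qed
  have s2: "eqv SI (\<psi> (Dxd k 0 * Dxd 0 (Poly_Mapping.single p 1)
           + (\<Sum>m\<in>M. fsc (of_nat (mbinom k m)) * Dxd (k - m) 0 * gen (GL (xd m p)))))
         (A k * V 0 + (\<Sum>m\<in>M. \<Sum>j\<in>{j. mle j m}. H m j))"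
  proof -
    have "eqv SI (\<psi> (Dxd k 0 * Dxd 0 (Poly_Mapping.single p 1)
           + (\<Sum>m\<in>M. fsc (of_nat (mbinom k m)) * Dxd (k - m) 0 * gen (GL (xd m p)))))
         (\<psi> (Dxd k 0 * Dxd 0 (Poly_Mapping.single p 1)) + \<psi> (\<Sum>m\<in>M. fsc (of_nat (mbinom k m)) * Dxd (k - m) 0 * gen (GL (xd m p))))"
      by (rule qh_add[OF psiH])
    also have "eqv SI \<dots> (A k * V 0 + (\<Sum>m\<in>M. \<Sum>j\<in>{j. mle j m}. H m j))"
      by (rule eqv_add[OF a eqv_trans[OF qh_sum[OF psiH] eqv_sum[OF b1]]])
    finally show ?thesis .
  qed
  have H0: "(\<Sum>j\<in>{j. mle j 0}. H 0 j) = A k * V 0"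
    by (simp add: mle_0_iff H_def cf_def mbinom_0 mbinom_00 msize_0)
  have KM: "K = insert 0 M" "0 \<notin> M" unfolding K_def M_def by (auto simp: mle_0)
  have s3: "A k * V 0 + (\<Sum>m\<in>M. \<Sum>j\<in>{j. mle j m}. H m j) = (\<Sum>m\<in>K. \<Sum>j\<in>{j. mle j m}. H m j)"
    using KM finM H0 by simp
  have s4: "(\<Sum>m\<in>K. \<Sum>j\<in>{j. mle j m}. H m j) = (\<Sum>j\<in>K. \<Sum>m\<in>{m. mle j m \<and> mle m k}. H m j)"
  proof -
    have "(\<Sum>m\<in>K. \<Sum>j\<in>{j. mle j m}. H m j) = (\<Sum>m\<in>K. \<Sum>j\<in>{j. j \<in> K \<and> mle j m}. H m j)"
      unfolding K_def by (intro sum.cong refl) (auto intro: mle_trans)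
    also have "\<dots> = (\<Sum>j\<in>K. \<Sum>m\<in>{m. m \<in> K \<and> mle j m}. H m j)"
      by (rule sum.swap_restrict[OF finK finK])
    also have "\<dots> = (\<Sum>j\<in>K. \<Sum>m\<in>{m. mle j m \<and> mle m k}. H m j)"
      unfolding K_def by (intro sum.cong refl) auto
    finally show ?thesis .
  qed
  have s5: "(\<Sum>j\<in>K. \<Sum>m\<in>{m. mle j m \<and> mle m k}. H m j) = A 0 * V k"
  proof -
    have "(\<Sum>j\<in>K. \<Sum>m\<in>{m. mle j m \<and> mle m k}. H m j)
        = (\<Sum>j\<in>K. fsc (\<Sum>m\<in>{m. mle j m \<and> mle m k}. cf m j) * A (k - j) * V j)"
      unfolding H_def by (simp add: fsc_sum sum_distrib_right)
    also have "\<dots> = (\<Sum>j\<in>K. if j = k then A 0 * V k else 0)"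
    proof (rule sum.cong[OF refl])
      fix j assume "j \<in> K"
      then have "(\<Sum>m\<in>{m. mle j m \<and> mle m k}. cf m j) = (if j = k then 1 else 0)"
        unfolding K_def cf_def by (intro MI2) simp
      then show "fsc (\<Sum>m\<in>{m. mle j m \<and> mle m k}. cf m j) * A (k - j) * V j = (if j = k then A 0 * V k else 0)"
        by simp
    qed
    also have "\<dots> = A 0 * V k" using finK by (simp add: K_def mle_refl)
    finally show ?thesis .
  qed
  have s6: "eqv SI (A 0 * V k) (V k)"
    unfolding A_def using eqv_rmult[OF sA_xm0] by simp
  have "eqv SI (\<psi> (\<phi> (V k))) (A k * V 0 + (\<Sum>m\<in>M. \<Sum>j\<in>{j. mle j m}. H m j))"
    using eqv_trans[OF s1 s2] .
  also have "\<dots> = A 0 * V k" using s3 s4 s5 by simp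
  also have "eqv SI \<dots> (V k)" by (rule s6)
  finally show ?thesis unfolding V_def .
qed


lemma FH: "quot_alg_hom SI SI (\<lambda>x. \<psi> (\<phi> x))" by (rule qh_comp[OF phiH psiH])
lemma GH: "quot_alg_hom TI TI (\<lambda>x. \<phi> (\<psi> x))" by (rule qh_comp[OF psiH phiH])

lemma smash_A: "eqv SI (\<psi> (\<phi> (gen (GA f)))) (gen (GA f))"
proof -
  have "eqv SI (\<psi> (\<phi> (gen (GA f)))) (\<psi> (Aemb f))" by (rule qh_cong[OF psiH phiA])
  also have "\<psi> (Aemb f) = \<psi> (\<Sum>r\<in>Poly_Mapping.keys f. fsc (Poly_Mapping.lookup f r) * Dxd r 0)"
    by (simp add: Aemb_def)
  also have "eqv SI \<dots> (\<Sum>r\<in>Poly_Mapping.keys f. \<psi> (fsc (Poly_Mapping.lookup f r) * Dxd r 0))"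
    by (rule qh_sum[OF psiH])
  also have "eqv SI \<dots> (\<Sum>r\<in>Poly_Mapping.keys f. fsc (Poly_Mapping.lookup f r) * gen (GA (xm r)))"
    by (rule eqv_sum, rule eqv_trans[OF qh_fsc[OF psiH] eqv_lmult[OF psiX]])
  also have "eqv SI \<dots> (gen (GA f))" by (rule eqv_sym[OF sA_expand])
  finally show ?thesis .
qed

lemma smash_V_smul:
  assumes "eqv SI (\<psi> (\<phi> (gen (GV eta)))) (gen (GV eta))"
  shows "eqv SI (\<psi> (\<phi> (gen (GV (vsc c eta))))) (gen (GV (vsc c eta)))"
proof -
  have "eqv SI (\<psi> (\<phi> (gen (GV (vsc c eta))))) (\<psi> (\<phi> (fsc c * gen (GV eta))))"
    by (rule qh_cong[OF FH sV_smul])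
  also have "eqv SI \<dots> (fsc c * \<psi> (\<phi> (gen (GV eta))))" by (rule qh_fsc[OF FH])
  also have "eqv SI \<dots> (fsc c * gen (GV eta))" by (rule eqv_lmult[OF assms])
  also have "eqv SI \<dots> (gen (GV (vsc c eta)))" by (rule eqv_sym[OF sV_smul])
  finally show ?thesis .
qed

lemma smash_GV: "eqv SI (\<psi> (\<phi> (gen (GV eta)))) (gen (GV eta))"
proof (induction eta rule: vf_induct)
  case 1
  have "eqv SI (\<psi> (\<phi> (gen (GV (vsc 0 (xd 0 undefined)))))) (gen (GV (vsc 0 (xd 0 undefined))))"
    by (rule smash_V_smul[OF smash_V])
  then show ?case unfolding vsc_0 .
next
  case (2 a b)
  have "eqv SI (\<psi> (\<phi> (gen (GV (a + b))))) (\<psi> (\<phi> (gen (GV a) + gen (GV b))))"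
    by (rule qh_cong[OF FH sV_add])
  also have "eqv SI \<dots> (\<psi> (\<phi> (gen (GV a))) + \<psi> (\<phi> (gen (GV b))))" by (rule qh_add[OF FH])
  also have "eqv SI \<dots> (gen (GV a) + gen (GV b))" by (rule eqv_add[OF 2])
  also have "eqv SI \<dots> (gen (GV (a + b)))" by (rule eqv_sym[OF sV_add])
  finally show ?case .
next
  case (3 c k p)
  show ?case by (rule smash_V_smul[OF smash_V])
qed

lemma smash_all: "eqv SI (\<psi> (\<phi> a)) a"
proof (rule hom_id_on_gens[OF FH])
  fix g show "eqv SI (\<psi> (\<phi> (gen g))) (gen g)"
    by (cases g) (simp_all add: smash_A smash_GV)
qed

lemma tens_X: "eqv TI (\<phi> (\<psi> (gen (GX i)))) (gen (GX i))"
proof -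
  have "eqv TI (\<phi> (\<psi> (Dxd (Poly_Mapping.single i 1) 0))) (\<phi> (gen (GA (xm (Poly_Mapping.single i 1)))))"
    by (rule qh_cong[OF phiH psiX])
  also have "eqv TI \<dots> (Dxd (Poly_Mapping.single i 1) 0)" by (rule phiX)
  finally show ?thesis unfolding GX_Dxd .
qed

lemma tens_D: "eqv TI (\<phi> (\<psi> (gen (GD i)))) (gen (GD i))"
proof -
  have "eqv TI (\<phi> (\<psi> (Dxd 0 (Poly_Mapping.single i 1)))) (\<phi> (gen (GA (xm 0)) * gen (GV (xd 0 i))))"
    using qh_cong[OF phiH psiD[of 0 "Poly_Mapping.single i 1"]] by (simp add: oprod_single' dvec_def)
  also have "eqv TI \<dots> (\<phi> (gen (GA (xm 0))) * \<phi> (gen (GV (xd 0 i))))" by (rule qh_mult[OF phiH])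
  also have "eqv TI \<dots> (Dxd 0 0 * (Dxd 0 0 * Dxd 0 (Poly_Mapping.single i 1)
           + (\<Sum>m\<in>{m. mle m 0 \<and> m \<noteq> 0}.
                fsc (of_nat (mbinom 0 m)) * Dxd (0 - m) 0 * gen (GL (xd m i)))))"
    by (rule eqv_mult[OF phiX phiV])
  also have "\<dots> = Dxd 0 (Poly_Mapping.single i 1)" by (simp add: mle_0_iff Dxd_00)
  finally show ?thesis unfolding GD_Dxd .
qed

lemma tens_Lxd:
  assumes m0: "m \<noteq> 0"
  shows "eqv TI (\<phi> (\<psi> (gen (GL (xd m p))))) (gen (GL (xd m p)))"
proof -
  define X where "X r = (Dxd r 0 :: ('k, ('n, ('k, 'n) vf) tgen) freealg)" for r
  define D where "D = (Dxd 0 (Poly_Mapping.single p 1) :: ('k, ('n, ('k, 'n) vf) tgen) freealg)"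
  define L where "L l = (gen (GL (xd l p)) :: ('k, ('n, ('k, 'n) vf) tgen) freealg)" for l
  define A where "A r = (gen (GA (xm r)) :: ('k, (('k, 'n) pol, ('k, 'n) vf) sgen) freealg)" for r
  define V where "V j = (gen (GV (xd j p)) :: ('k, (('k, 'n) pol, ('k, 'n) vf) sgen) freealg)" for j
  define s where "s j = ((-1) ^ msize (m - j) * of_nat (mbinom m j) :: 'k)" for j
  define C where "C j l = (of_nat (mbinom j l) :: 'k)" for j l :: "'n \<Rightarrow>\<^sub>0 nat"
  define J where "J = {j. mle j m}"
  define N where "N j = {l. mle l j \<and> l \<noteq> 0}" for j :: "'n \<Rightarrow>\<^sub>0 nat"
  define NN where "NN = {l. mle l m \<and> l \<noteq> 0}"
  have finJ: "finite J" unfolding J_def by (rule finite_mle)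
  have finNN: "finite NN" unfolding NN_def using finite_mle[of m] by (auto intro: rev_finite_subset)
  have t1: "eqv TI (\<phi> (\<psi> (L m))) (\<phi> (\<Sum>j\<in>J. fsc (s j) * A (m - j) * V j))"
    unfolding L_def J_def s_def A_def V_def by (rule qh_cong[OF phiH psiL[OF m0]])
  also have "eqv TI \<dots> (\<Sum>j\<in>J. \<phi> (fsc (s j) * A (m - j) * V j))" by (rule qh_sum[OF phiH])
  also have "eqv TI \<dots> (\<Sum>j\<in>J. fsc (s j) * X (m - j) * (X j * D + (\<Sum>l\<in>N j. fsc (C j l) * X (j - l) * L l)))"
    unfolding X_def D_def N_def C_def L_def A_def V_def
    by (rule eqv_sum, rule eqv_trans[OF qh_fsc3[OF phiH]], rule eqv_mult[OF eqv_lmult[OF phiX] phiV])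
  also have "\<dots> = (\<Sum>j\<in>J. fsc (s j) * X (m - j) * (X j * D)) + (\<Sum>j\<in>J. \<Sum>l\<in>N j. fsc (s j) * X (m - j) * (fsc (C j l) * X (j - l) * L l))"
    by (simp add: distrib_left sum.distrib sum_distrib_left)
  also have "eqv TI \<dots> ((\<Sum>j\<in>J. fsc (s j) * X m * D) + (\<Sum>j\<in>J. \<Sum>l\<in>N j. fsc (s j * C j l) * X (m - l) * L l))"
  proof (rule eqv_add)
    show "eqv TI (\<Sum>j\<in>J. fsc (s j) * X (m - j) * (X j * D)) (\<Sum>j\<in>J. fsc (s j) * X m * D)"
    proof (rule eqv_sum)
      fix j assume j: "j \<in> J"
      have "(m - j) + j = m" using j unfolding J_def
        by (intro poly_mapping_eqI) (simp add: mle_def lookup_add lookup_minus)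
      then have "eqv TI (X (m - j) * X j) (X m)" using X_add[of "m - j" j] unfolding X_def by simp
      then have "eqv TI (fsc (s j) * (X (m - j) * X j) * D) (fsc (s j) * X m * D)"
        by (intro eqv_rmult eqv_lmult)
      then show "eqv TI (fsc (s j) * X (m - j) * (X j * D)) (fsc (s j) * X m * D)"
        by (simp add: mult.assoc)
    qed
    show "eqv TI (\<Sum>j\<in>J. \<Sum>l\<in>N j. fsc (s j) * X (m - j) * (fsc (C j l) * X (j - l) * L l))
        (\<Sum>j\<in>J. \<Sum>l\<in>N j. fsc (s j * C j l) * X (m - l) * L l)"
    proof (intro eqv_sum)
      fix j l assume j: "j \<in> J" and l: "l \<in> N j"
      have "(m - j) + (j - l) = m - l" using j l unfolding J_def N_def
        by (intro mle_sub) auto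
      then have "eqv TI (X (m - j) * X (j - l)) (X (m - l))" using X_add[of "m - j" "j - l"] unfolding X_def by simp
      then show "eqv TI (fsc (s j) * X (m - j) * (fsc (C j l) * X (j - l) * L l)) (fsc (s j * C j l) * X (m - l) * L l)"
        unfolding fsc_reassoc by (intro eqv_rmult eqv_lmult)
    qed
  qed
  also have "(\<Sum>j\<in>J. fsc (s j) * X m * D) = 0"
  proof -
    have "(\<Sum>j\<in>J. fsc (s j) * X m * D) = fsc (\<Sum>j\<in>J. s j) * X m * D"
      by (simp add: fsc_sum sum_distrib_right)
    also have "(\<Sum>j\<in>J. s j) = (\<Sum>j\<in>{j. mle 0 j \<and> mle j m}. (-1)^msize (m - j) * of_nat (mbinom m j) * of_nat (mbinom j 0))"
      unfolding J_def s_def by (simp add: mle_0 mbinom_0)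
    also have "\<dots> = 0" using MI1[OF mle_0, of m] m0 by simp
    finally show ?thesis by simp
  qed
  also have "(\<Sum>j\<in>J. \<Sum>l\<in>N j. fsc (s j * C j l) * X (m - l) * L l) = L m"
  proof -
    have "(\<Sum>j\<in>J. \<Sum>l\<in>N j. fsc (s j * C j l) * X (m - l) * L l)
        = (\<Sum>j\<in>J. \<Sum>l\<in>{l. l \<in> NN \<and> mle l j}. fsc (s j * C j l) * X (m - l) * L l)"
      unfolding J_def N_def NN_def by (intro sum.cong refl) (auto intro: mle_trans)
    also have "\<dots> = (\<Sum>l\<in>NN. \<Sum>j\<in>{j. j \<in> J \<and> mle l j}. fsc (s j * C j l) * X (m - l) * L l)"
      by (rule sum.swap_restrict[OF finJ finNN])
    also have "\<dots> = (\<Sum>l\<in>NN. fsc (\<Sum>j\<in>{j. mle l j \<and> mle j m}. s j * C j l) * X (m - l) * L l)"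
      unfolding J_def by (simp add: fsc_sum sum_distrib_right conj_commute)
    also have "\<dots> = (\<Sum>l\<in>NN. if l = m then X 0 * L m else 0)"
    proof (rule sum.cong[OF refl])
      fix l assume "l \<in> NN"
      then have "(\<Sum>j\<in>{j. mle l j \<and> mle j m}. s j * C j l) = (if l = m then 1 else 0)"
        unfolding NN_def s_def C_def by (intro MI1) simp
      then show "fsc (\<Sum>j\<in>{j. mle l j \<and> mle j m}. s j * C j l) * X (m - l) * L l = (if l = m then X 0 * L m else 0)"
        by simp
    qed
    also have "\<dots> = X 0 * L m" using finNN m0 by (simp add: NN_def mle_refl)
    also have "\<dots> = L m" by (simp add: X_def Dxd_00)
    finally show ?thesis .
  qed
  finally show ?thesis unfolding L_def by simp
qed

lemma GL_0: "eqv TI (gen (GL 0)) 0"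
proof -
  have "eqv TI (gen (GL 0)) (gen (GL 0) + gen (GL 0))" using tL_add[OF Lplus_0 Lplus_0] by simp
  then have "eqv TI (gen (GL 0) - gen (GL 0)) (gen (GL 0) + gen (GL 0) - gen (GL 0))"
    by (rule eqv_diff) simp
  then have "eqv TI 0 (gen (GL 0))" by simp
  then show ?thesis by (rule eqv_sym)
qed

lemma G_zero_of: "eqv TI a 0 \<Longrightarrow> eqv TI (\<phi> (\<psi> a)) a"
proof -
  assume a: "eqv TI a 0"
  have "eqv TI (\<phi> (\<psi> a)) (\<phi> (\<psi> 0))" by (rule qh_cong[OF GH a])
  also have "eqv TI \<dots> 0" by (rule qh_zero[OF GH])
  also have "eqv TI \<dots> a" by (rule eqv_sym[OF a])
  finally show ?thesis .
qed

lemma tens_L_Lplus: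
  assumes "eta \<in> Lplus"
  shows "eta \<in> Lplus \<and> eqv TI (\<phi> (\<psi> (gen (GL eta)))) (gen (GL eta))"
proof (induction eta rule: vf_induct)
  case 1
  show ?case by (rule conjI[OF Lplus_0 G_zero_of[OF GL_0]])
next
  case (2 a b)
  then have ab: "a \<in> Lplus" "b \<in> Lplus" by auto
  have "eqv TI (\<phi> (\<psi> (gen (GL (a + b))))) (\<phi> (\<psi> (gen (GL a) + gen (GL b))))"
    by (rule qh_cong[OF GH tL_add[OF ab]])
  also have "eqv TI \<dots> (\<phi> (\<psi> (gen (GL a))) + \<phi> (\<psi> (gen (GL b))))" by (rule qh_add[OF GH])
  also have "eqv TI \<dots> (gen (GL a) + gen (GL b))" using 2 by (intro eqv_add) auto
  also have "eqv TI \<dots> (gen (GL (a + b)))" by (rule eqv_sym[OF tL_add[OF ab]])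
  finally show ?case using Lplus_add[OF ab] by (intro conjI)
next
  case (3 c k p)
  then have k0: "k \<noteq> 0" using Lplus_keys[OF assms] by blast
  have "eqv TI (\<phi> (\<psi> (gen (GL (vsc c (xd k p)))))) (\<phi> (\<psi> (fsc c * gen (GL (xd k p)))))"
    by (rule qh_cong[OF GH tL_smul[OF Lplus_xd[OF k0]]])
  also have "eqv TI \<dots> (fsc c * \<phi> (\<psi> (gen (GL (xd k p)))))" by (rule qh_fsc[OF GH])
  also have "eqv TI \<dots> (fsc c * gen (GL (xd k p)))" by (rule eqv_lmult[OF tens_Lxd[OF k0]])
  also have "eqv TI \<dots> (gen (GL (vsc c (xd k p))))" by (rule eqv_sym[OF tL_smul[OF Lplus_xd[OF k0]]])
  finally show ?case using Lplus_vsc_xd[OF k0] by (intro conjI)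
qed

lemma tens_L: "eqv TI (\<phi> (\<psi> (gen (GL eta)))) (gen (GL eta))"
proof (cases "eta \<in> Lplus")
  case True then show ?thesis using tens_L_Lplus by blast
next
  case False then show ?thesis by (rule G_zero_of[OF tL_out])
qed

lemma tens_all: "eqv TI (\<phi> (\<psi> b)) b"
proof (rule hom_id_on_gens[OF GH])
  fix g show "eqv TI (\<phi> (\<psi> (gen g))) (gen g)"
    by (cases g) (simp_all add: tens_X tens_D tens_L)
qed

lemma main: "(\<forall>a. \<psi> (\<phi> a) - a \<in> smash_ideal) \<and> (\<forall>b. \<phi> (\<psi> b) - b \<in> tens_ideal)"
  using smash_all tens_all unfolding eqv_def smash_ideal_def tens_ideal_def by blast

end


theorem lemma3p5:
  fixes \<phi> :: "('k::{alg_closed_field, field_char_0}, (('k, 'n::{finite,linorder}) pol, ('k, 'n) vf) sgen) freealg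
               \<Rightarrow> ('k, ('n, ('k, 'n) vf) tgen) freealg"
    and \<psi> :: "('k, ('n, ('k, 'n) vf) tgen) freealg \<Rightarrow> ('k, (('k, 'n) pol, ('k, 'n) vf) sgen) freealg"
  assumes phi_hom: "quot_alg_hom smash_ideal tens_ideal \<phi>"
    and phi_A: "\<And>f. \<phi> (gen (GA f)) - Aemb f \<in> tens_ideal"
    and phi_V: "\<And>k p. \<phi> (gen (GV (xd k p))) -
          (Dxd k 0 * Dxd 0 (Poly_Mapping.single p 1)
           + (\<Sum>m\<in>{m. mle m k \<and> m \<noteq> 0}.
                fsc (of_nat (mbinom k m)) * Dxd (k - m) 0 * gen (GL (xd m p))))
        \<in> tens_ideal"
    and psi_hom: "quot_alg_hom tens_ideal smash_ideal \<psi>"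
    and psi_D: "\<And>r s. \<psi> (Dxd r s) -
          gen (GA (xm r)) * oprod (\<lambda>i. gen (GV (dvec i))) s \<in> smash_ideal"
    and psi_L: "\<And>m p. m \<noteq> 0 \<Longrightarrow> \<psi> (gen (GL (xd m p))) -
          (\<Sum>k\<in>{k. mle k m}.
             fsc ((-1) ^ msize (m - k) * of_nat (mbinom m k))
               * gen (GA (xm (m - k))) * gen (GV (xd k p)))
        \<in> smash_ideal"
  shows "(\<forall>a. \<psi> (\<phi> a) - a \<in> smash_ideal) \<and> (\<forall>b. \<phi> (\<psi> b) - b \<in> tens_ideal)"
  proof -
  have L: "L35 \<phi> \<psi>"
    by (rule L35.intro) (rule assms; assumption)+
  show ?thesis by (rule L35.main[OF L])
qed

end
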